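(* Let $\Gamma$ be an elliptic graph with NN-elliptic sequence $\{B_j\}_{j=-1}^m$ and cycles $C_j$, and let $-1\le j\le m-1$. If $v\in\mathcal V(\Gamma)\setminus\mathcal V(B_{j+1})$ satisfies $(E_{B_{j+1}},E_v)=1$, where $E_{B_{j+1}}=\sum_{w\in\mathcal V(B_{j+1})}E_w$, then $(C_j,E_v)=e_v+1$.
   Context: Let $\Gamma$ be a finite connected tree with vertex set $\mathcal V$, each vertex $v$ decorated by an integer $e_v$ (genera zero). $L=\mathbb Z\langle E_v\rangle$ with form $(E_v,E_v)=e_v$, $(E_v,E_w)=1$ for adjacent $v\ne w$, $0$ otherwise, assumed negative definite; $L'$ the dual lattice, $[l']$ the class in $L'/L$; $\ge$ coordinatewise, $l>0$ if $l\ge0,l\ne0$; $|l'|$ the support. $Z_K$ with $(Z_K,E_v)=e_v+2$; $\chi(l')=-(l',l'-Z_K)/2$. $\mathcal S'=\{l':(l',E_v)\le0\ \forall v\}$, $s_h=\min\{l'\in\mathcal S':[l']=h\}$; $Z_{min}(B)$ the minimal nonzero element of $\mathcal S'(B)\cap L(B)$ for a connected full subgraph $B$. Elliptic graph: $e_v\le-2$ for all $v$, $\min_{l\in L,l>0}\chi(l)=0$. NN-elliptic sequence: $B_{-1}=\Gamma$, $Z_{B_{-1}}=s_{[Z_K]}$, $B_0=|Z_K-s_{[Z_K]}|$; for $j\ge0$, $Z_{B_j}=Z_{min}(B_j)$, and if $Z_K-\sum_{i=-1}^jZ_{B_i}\ne0$ then $B_{j+1}=|Z_K-\sum_{i=-1}^jZ_{B_i}|$;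 $m$ is the index with $Z_K=\sum_{i=-1}^mZ_{B_i}$; $C_j=\sum_{i=-1}^jZ_{B_i}$. *)

theory Defs
  imports Complex_Main "HOL-Library.Function_Algebras"
begin

text \<open>Rational cycles l' in L tensor Q are represented by
  their coefficient functions 'v => rat with respect to the basis E_v, vanishing off V.\<close>

definition is_tree :: "'v set \<Rightarrow> ('v \<Rightarrow> 'v \<Rightarrow> bool) \<Rightarrow> bool" where
  "is_tree V adj \<longleftrightarrow> finite V \<and> V \<noteq> {}
     \<and> (\<forall>v w. adj v w \<longrightarrow> v \<in> V \<and> w \<in> V \<and> v \<noteq> w \<and> adj w v)
     \<and> (\<forall>v\<in>V. \<forall>w\<in>V. (adj\<^sup>*\<^sup>*) v w)
     \<and> card {(v, w). adj v w} = 2 * (card V - 1)"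

definition Evec :: "'v \<Rightarrow> 'v \<Rightarrow> rat" where
  "Evec v = (\<lambda>w. if w = v then 1 else 0)"

definition Eset :: "'v set \<Rightarrow> 'v \<Rightarrow> rat" where
  "Eset B = (\<lambda>w. if w \<in> B then 1 else 0)"

definition imat :: "('v \<Rightarrow> 'v \<Rightarrow> bool) \<Rightarrow> ('v \<Rightarrow> int) \<Rightarrow> 'v \<Rightarrow> 'v \<Rightarrow> rat" where
  "imat adj e v w = (if v = w then of_int (e v) else if adj v w then 1 else 0)"

definition form :: "'v set \<Rightarrow> ('v \<Rightarrow> 'v \<Rightarrow> bool) \<Rightarrow> ('v \<Rightarrow> int)
     \<Rightarrow> ('v \<Rightarrow> rat) \<Rightarrow> ('v \<Rightarrow> rat) \<Rightarrow> rat" where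
  "form V adj e x y = (\<Sum>v\<in>V. \<Sum>w\<in>V. x v * y w * imat adj e v w)"

definition supported :: "'v set \<Rightarrow> ('v \<Rightarrow> rat) \<Rightarrow> bool" where
  "supported B x \<longleftrightarrow> (\<forall>v. v \<notin> B \<longrightarrow> x v = 0)"

definition lat :: "'v set \<Rightarrow> ('v \<Rightarrow> rat) set" where
  "lat B = {x. supported B x \<and> (\<forall>v. x v \<in> \<int>)}"

definition dual_lat :: "'v set \<Rightarrow> ('v \<Rightarrow> 'v \<Rightarrow> bool) \<Rightarrow> ('v \<Rightarrow> int) \<Rightarrow> ('v \<Rightarrow> rat) set" where
  "dual_lat V adj e = {x. supported V x \<and> (\<forall>v\<in>V. form V adj e x (Evec v) \<in> \<int>)}"

definition neg_definite :: "'v set \<Rightarrow> ('v \<Rightarrow> 'v \<Rightarrow> bool) \<Rightarrow> ('v \<Rightarrow> int) \<Rightarrow> bool" where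
  "neg_definite V adj e \<longleftrightarrow> (\<forall>l\<in>lat V. l \<noteq> 0 \<longrightarrow> form V adj e l l < 0)"

definition ZK :: "'v set \<Rightarrow> ('v \<Rightarrow> 'v \<Rightarrow> bool) \<Rightarrow> ('v \<Rightarrow> int) \<Rightarrow> 'v \<Rightarrow> rat" where
  "ZK V adj e = (THE z. supported V z \<and> (\<forall>v\<in>V. form V adj e z (Evec v) = of_int (e v) + 2))"

definition chi :: "'v set \<Rightarrow> ('v \<Rightarrow> 'v \<Rightarrow> bool) \<Rightarrow> ('v \<Rightarrow> int) \<Rightarrow> ('v \<Rightarrow> rat) \<Rightarrow> rat" where
  "chi V adj e l = - form V adj e l (l - ZK V adj e) / 2"

definition lipman :: "'v set \<Rightarrow> ('v \<Rightarrow> 'v \<Rightarrow> bool) \<Rightarrow> ('v \<Rightarrow> int) \<Rightarrow> ('v \<Rightarrow> rat) set" where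
  "lipman V adj e = {x \<in> dual_lat V adj e. \<forall>v\<in>V. form V adj e x (Evec v) \<le> 0}"

definition support :: "'v set \<Rightarrow> ('v \<Rightarrow> rat) \<Rightarrow> 'v set" where
  "support V x = {v \<in> V. x v \<noteq> 0}"

definition is_least_in :: "('v \<Rightarrow> rat) set \<Rightarrow> ('v \<Rightarrow> rat) \<Rightarrow> bool" where
  "is_least_in A z \<longleftrightarrow> z \<in> A \<and> (\<forall>y\<in>A. z \<le> y)"

text \<open>s_h for h = [x]: the minimum of {l' in S' : [l'] = [x]}.\<close>
definition is_s_class :: "'v set \<Rightarrow> ('v \<Rightarrow> 'v \<Rightarrow> bool) \<Rightarrow> ('v \<Rightarrow> int) \<Rightarrow> ('v \<Rightarrow> rat)
     \<Rightarrow> ('v \<Rightarrow> rat) \<Rightarrow> bool" where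
  "is_s_class V adj e x s \<longleftrightarrow> is_least_in {l \<in> lipman V adj e. l - x \<in> lat V} s"

text \<open>Z_min(B): minimal nonzero element of S'(B) \<inter> L(B) (Artin fundamental cycle of B).
  For l in L(B), (l, E_v)_B = (l, E_v) for v in B.\<close>
definition is_Zmin :: "'v set \<Rightarrow> ('v \<Rightarrow> 'v \<Rightarrow> bool) \<Rightarrow> ('v \<Rightarrow> int) \<Rightarrow> 'v set
     \<Rightarrow> ('v \<Rightarrow> rat) \<Rightarrow> bool" where
  "is_Zmin V adj e B z \<longleftrightarrow>
     is_least_in {l \<in> lat B. l \<noteq> 0 \<and> (\<forall>v\<in>B. form V adj e l (Evec v) \<le> 0)} z"

definition elliptic :: "'v set \<Rightarrow> ('v \<Rightarrow> 'v \<Rightarrow> bool) \<Rightarrow> ('v \<Rightarrow> int) \<Rightarrow> bool" where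
  "elliptic V adj e \<longleftrightarrow> (\<forall>v\<in>V. e v \<le> -2)
     \<and> (\<forall>l\<in>lat V. l > 0 \<longrightarrow> chi V adj e l \<ge> 0)
     \<and> (\<exists>l\<in>lat V. l > 0 \<and> chi V adj e l = 0)"

definition Cseq :: "(int \<Rightarrow> 'v \<Rightarrow> rat) \<Rightarrow> int \<Rightarrow> 'v \<Rightarrow> rat" where
  "Cseq Z j = (\<Sum>i\<in>{-1..j}. Z i)"

text \<open>(B, Z, m) is the NN-elliptic sequence: B j = B_j, Z j = Z_{B_j}, for -1 <= j <= m.\<close>
definition NN_elliptic_seq :: "'v set \<Rightarrow> ('v \<Rightarrow> 'v \<Rightarrow> bool) \<Rightarrow> ('v \<Rightarrow> int)
     \<Rightarrow> (int \<Rightarrow> 'v set) \<Rightarrow> (int \<Rightarrow> 'v \<Rightarrow> rat) \<Rightarrow> int \<Rightarrow> bool" where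
  "NN_elliptic_seq V adj e B Z m \<longleftrightarrow>
     m \<ge> -1
     \<and> B (-1) = V
     \<and> is_s_class V adj e (ZK V adj e) (Z (-1))
     \<and> (\<forall>j. -1 \<le> j \<and> j < m \<longrightarrow> ZK V adj e - Cseq Z j \<noteq> 0
             \<and> B (j + 1) = support V (ZK V adj e - Cseq Z j))
     \<and> (\<forall>j. 0 \<le> j \<and> j \<le> m \<longrightarrow> is_Zmin V adj e (B j) (Z j))
     \<and> ZK V adj e = Cseq Z m"

end

theory Submission
  imports Defs
begin

lemma sum_fun_app: "(sum f S) x = (\<Sum>i\<in>S. f i x)"
  for f :: "'a \<Rightarrow> 'v \<Rightarrow> 'b::comm_monoid_add"
  by (induction S rule: infinite_finite_induct) auto

definition sc :: "rat \<Rightarrow> ('v \<Rightarrow> rat) \<Rightarrow> ('v \<Rightarrow> rat)" where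
  "sc c f = (\<lambda>x. c * f x)"

lemma vs_sc: "vector_space sc"
  by unfold_locales (auto simp: sc_def fun_eq_iff algebra_simps)

lemma surj_lin:
  fixes T :: "('v \<Rightarrow> rat) \<Rightarrow> ('v \<Rightarrow> rat)" and V :: "'v set"
  assumes fin: "finite V"
    and add: "\<And>x y. T (x + y) = T x + T y"
    and scl: "\<And>c x. T (sc c x) = sc c (T x)"
    and sup: "\<And>x. supported V x \<Longrightarrow> supported V (T x)"
    and inj: "\<And>d. supported V d \<Longrightarrow> T d = 0 \<Longrightarrow> d = 0"
    and b: "supported V b"
  shows "\<exists>x. supported V x \<and> T x = b"
proof -
  interpret vs: vector_space sc by (rule vs_sc)
  interpret mh: module_hom sc sc T
  proof unfold_locales
    show "T (b1 + b2) = T b1 + T b2" for b1 b2 by (rule add)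
    show "T (sc r b) = sc r (T b)" for r b by (rule scl)
  qed
  let ?S = "Evec ` V"
  have subsp: "vs.subspace {x. supported V x}"
    by (rule vs.subspaceI) (auto simp: supported_def sc_def)
  have span1: "vs.span ?S \<subseteq> {x. supported V x}"
    by (rule vs.span_minimal) (use subsp in \<open>auto simp: supported_def Evec_def\<close>)
  have span2: "supported V x \<Longrightarrow> x \<in> vs.span ?S" for x
  proof -
    assume sx: "supported V x"
    have "x = (\<Sum>w\<in>V. sc (x w) (Evec w))"
    proof (rule ext)
      fix y
      have "(\<Sum>w\<in>V. sc (x w) (Evec w)) y = (\<Sum>w\<in>V. if y = w then x w else 0)"
        unfolding sum_fun_app sc_def Evec_def by (rule sum.cong) auto
      also have "\<dots> = (if y \<in> V then x y else 0)"
        using fin by (simp add: sum.delta)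
      also have "\<dots> = x y" using sx by (auto simp: supported_def)
      finally show "x y = (\<Sum>w\<in>V. sc (x w) (Evec w)) y" by (rule sym)
    qed
    also have "\<dots> \<in> vs.span ?S"
      by (intro vs.span_sum vs.span_scale vs.span_base) auto
    finally show ?thesis .
  qed
  have spanS: "vs.span ?S = {x. supported V x}" using span1 span2 by auto
  have indS: "vs.independent ?S"
    unfolding vs.independent_explicit_finite_subsets
  proof (intro allI impI ballI)
    fix S' u f
    assume S': "S' \<subseteq> ?S" "finite S'" and z: "(\<Sum>v\<in>S'. sc (u v) v) = 0" and f: "f \<in> S'"
    then obtain a where a: "f = Evec a" by auto
    have "0 = (\<Sum>v\<in>S'. sc (u v) v) a" using z by simp
    also have "\<dots> = (\<Sum>v\<in>S'. u v * v a)" by (simp add: sum_fun_app sc_def)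
    also have "\<dots> = u f * f a + (\<Sum>v\<in>S' - {f}. u v * v a)"
      using S' f by (simp add: sum.remove)
    also have "(\<Sum>v\<in>S' - {f}. u v * v a) = 0"
    proof (rule sum.neutral, rule ballI)
      fix g assume g: "g \<in> S' - {f}"
      then obtain b' where "g = Evec b'" using S' by auto
      with g a have "b' \<noteq> a" by auto
      then show "u g * g a = 0" using \<open>g = Evec b'\<close> by (simp add: Evec_def)
    qed
    finally show "u f = 0" using a by (simp add: Evec_def)
  qed
  have injS: "inj_on T (vs.span ?S)"
  proof (rule inj_onI)
    fix x y assume "x \<in> vs.span ?S" "y \<in> vs.span ?S" "T x = T y"
    then have "supported V (x - y)" "T (x - y) = 0"
      using spanS by (auto simp: supported_def mh.diff)
    then show "x = y" using inj by force
  qed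
  have indT: "vs.independent (T ` ?S)"
    by (rule mh.independent_injective_image[OF indS injS])
  show ?thesis
  proof (rule ccontr)
    assume nb: "\<not> ?thesis"
    have "b \<notin> vs.span (T ` ?S)"
      using nb spanS by (auto simp: mh.span_image)
    then have ind2: "vs.independent (insert b (T ` ?S))"
      by (rule vs.independent_insertI) (rule indT)
    have sub2: "insert b (T ` ?S) \<subseteq> vs.span ?S"
      using spanS b sup by (auto simp: supported_def Evec_def)
    have fS: "finite ?S" using fin by simp
    have cb: "card (insert b (T ` ?S)) \<le> card ?S"
      using vs.independent_span_bound[OF fS ind2 sub2] by (rule conjunct2)
    moreover have "b \<notin> T ` ?S"
    proof
      assume "b \<in> T ` ?S"
      then have "b \<in> vs.span (T ` ?S)" by (rule vs.span_base)
      then show False using \<open>b \<notin> vs.span (T ` ?S)\<close> by contradiction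
    qed
    moreover have "card (T ` ?S) = card ?S"
    proof (rule card_image)
      show "inj_on T ?S" by (rule inj_on_subset[OF injS vs.span_superset])
    qed
    ultimately show False using fS by (simp add: card_insert_if)
  qed
qed


locale pl =
  fixes V :: "'v set" and adj :: "'v \<Rightarrow> 'v \<Rightarrow> bool" and e :: "'v \<Rightarrow> int"
  assumes fin: "finite V"
    and symm: "\<And>v w. adj v w \<Longrightarrow> adj w v"
    and nd: "neg_definite V adj e"
begin

abbreviation F where "F \<equiv> form V adj e"

lemma imat_sym: "imat adj e v w = imat adj e w v"
  using symm by (auto simp: imat_def)

lemma F_add: "F (x + y) z = F x z + F y z"
  by (simp add: form_def algebra_simps sum.distrib)

lemma F_diff: "F (x - y) z = F x z - F y z"
  by (simp add: form_def algebra_simps sum_subtractf)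

lemma F_add2: "F z (x + y) = F z x + F z y"
  by (simp add: form_def algebra_simps sum.distrib)

lemma F_zero: "F 0 z = 0"
  by (simp add: form_def)

lemma F_sum: "F (sum f S) z = (\<Sum>i\<in>S. F (f i) z)"
proof (induction S rule: infinite_finite_induct)
  case (insert x S)
  then show ?case by (simp only: sum.insert[OF insert(1,2)] F_add insert(3))
qed (simp_all add: form_def)

lemma F_scale: "F (\<lambda>v. c * x v) z = c * F x z"
  by (simp add: form_def sum_distrib_left algebra_simps)

lemma F_scale2: "F (\<lambda>v. c * x v) (\<lambda>v. c * y v) = c * c * F x y"
  by (simp add: form_def sum_distrib_left algebra_simps)

lemma F_sym: "F x y = F y x"
  unfolding form_def by (subst sum.swap) (simp add: imat_sym algebra_simps)

lemma F_Evec: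
  assumes w: "w \<in> V" shows "F x (Evec w) = (\<Sum>v\<in>V. x v * imat adj e v w)"
  unfolding form_def
proof (rule sum.cong[OF refl])
  fix v assume "v \<in> V"
  have "(\<Sum>u\<in>V. x v * Evec w u * imat adj e v u) = (\<Sum>u\<in>V. if u = w then x v * imat adj e v u else 0)"
    by (rule sum.cong) (auto simp: Evec_def)
  also have "\<dots> = x v * imat adj e v w" using fin w by (simp add: sum.delta')
  finally show "(\<Sum>u\<in>V. x v * Evec w u * imat adj e v u) = x v * imat adj e v w" .
qed

lemma F_Evec_out: "w \<notin> V \<Longrightarrow> F x (Evec w) = 0"
  unfolding form_def Evec_def by (intro sum.neutral ballI) auto

lemma F_exp: "F x y = (\<Sum>w\<in>V. y w * F x (Evec w))"
proof -
  have "F x y = (\<Sum>w\<in>V. \<Sum>v\<in>V. x v * y w * imat adj e v w)"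
    unfolding form_def by (rule sum.swap)
  also have "\<dots> = (\<Sum>w\<in>V. y w * F x (Evec w))"
    by (rule sum.cong) (auto simp: F_Evec sum_distrib_left algebra_simps)
  finally show ?thesis .
qed

lemma rat_common_denom:
  fixes d :: "'v \<Rightarrow> rat"
  shows "\<exists>N::int. N > 0 \<and> (\<forall>v\<in>V. of_int N * d v \<in> \<int>)"
proof -
  define b where "b v = snd (quotient_of (d v))" for v
  define a where "a v = fst (quotient_of (d v))" for v
  have bpos: "b v > 0" for v unfolding b_def by (rule quotient_of_denom_pos')
  have dv: "d v = of_int (a v) / of_int (b v)" for v
    unfolding a_def b_def by (rule quotient_of_div) simp
  define N where "N = (\<Prod>v\<in>V. b v)"
  have "N > 0" unfolding N_def using bpos by (simp add: prod_pos)
  moreover have "of_int N * d v \<in> \<int>" if v: "v \<in> V" for v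
  proof -
    have "N = b v * (\<Prod>u\<in>V - {v}. b u)"
      unfolding N_def using v fin by (simp add: prod.remove)
    then have "of_int N * d v = of_int (a v * (\<Prod>u\<in>V - {v}. b u))"
      using bpos[of v] by (simp add: dv field_simps)
    then show ?thesis using Ints_of_int by metis
  qed
  ultimately show ?thesis by blast
qed

lemma nondeg:
  assumes s: "supported V d" and z: "\<forall>w\<in>V. F d (Evec w) = 0"
  shows "d = 0"
proof -
  have dd: "F d d = 0" by (subst F_exp) (simp add: z)
  obtain N :: int where N: "N > 0" "\<forall>v\<in>V. of_int N * d v \<in> \<int>"
    using rat_common_denom by blast
  define l where "l = (\<lambda>v. of_int N * d v)"
  have "l \<in> lat V"
    using s N(2) by (auto simp: lat_def l_def supported_def)
  moreover have "F l l = 0" unfolding l_def F_scale2 dd by simp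
  ultimately have "l = 0" using nd unfolding neg_definite_def by fastforce
  then show ?thesis using N(1) by (auto simp: l_def fun_eq_iff)
qed

lemma ZK_prop: "supported V (ZK V adj e) \<and> (\<forall>w\<in>V. F (ZK V adj e) (Evec w) = of_int (e w) + 2)"
proof -
  define T where "T x = (\<lambda>w. if w \<in> V then F x (Evec w) else 0)" for x
  define b where "b = (\<lambda>w. if w \<in> V then of_int (e w) + 2 else (0::rat))"
  have "\<exists>x. supported V x \<and> T x = b"
  proof (rule surj_lin[OF fin])
    show "T (x + y) = T x + T y" for x y by (auto simp: T_def fun_eq_iff F_add)
    show "T (sc c x) = sc c (T x)" for c x by (auto simp: T_def fun_eq_iff sc_def F_scale)
    show "supported V (T x)" for x by (simp add: T_def supported_def)
    show "d = 0" if "supported V d" "T d = 0" for d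
    proof (rule nondeg)
      show "supported V d" by (rule that(1))
      show "\<forall>w\<in>V. F d (Evec w) = 0"
      proof
        fix w assume w: "w \<in> V"
        have "T d w = 0" using that(2) by simp
        then show "F d (Evec w) = 0" using w by (simp add: T_def)
      qed
    qed
    show "supported V b" by (simp add: b_def supported_def)
  qed
  then obtain x where x: "supported V x" "T x = b" by blast
  have ex: "supported V x \<and> (\<forall>w\<in>V. F x (Evec w) = of_int (e w) + 2)"
    using x by (auto simp: T_def b_def fun_eq_iff) (metis)
  have un: "y = x" if "supported V y \<and> (\<forall>w\<in>V. F y (Evec w) = of_int (e w) + 2)" for y
  proof -
    have "y - x = 0"
      by (rule nondeg) (use that ex in \<open>auto simp: supported_def F_diff\<close>)
    then show ?thesis by simp
  qed
  show ?thesis unfolding ZK_def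
    by (rule theI[of _ x]) (use ex un in blast)+
qed

lemma chi_eq: "chi V adj e l = - F l l / 2 + (\<Sum>w\<in>V. l w * (of_int (e w) + 2)) / 2"
proof -
  have "F l (ZK V adj e) = F (ZK V adj e) l" by (rule F_sym)
  also have "\<dots> = (\<Sum>w\<in>V. l w * (of_int (e w) + 2))"
    by (subst F_exp) (rule sum.cong, auto simp: ZK_prop)
  finally have "F l (ZK V adj e) = (\<Sum>w\<in>V. l w * (of_int (e w) + 2))" .
  moreover have "F l (l - ZK V adj e) = F l l - F l (ZK V adj e)"
    using F_diff F_sym by metis
  ultimately show ?thesis unfolding chi_def by (simp add: field_simps)
qed

lemma negativity:
  assumes BV: "Bs \<subseteq> V" and l: "l \<in> lat Bs" and neg: "\<forall>w\<in>Bs. F l (Evec w) \<le> 0"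
  shows "0 \<le> l"
proof -
  define n where "n = (\<lambda>v. if l v < 0 then - l v else 0)"
  define p where "p = (\<lambda>v. if l v < 0 then 0 else l v)"
  have lpn: "l = p - n" by (auto simp: fun_eq_iff p_def n_def)
  have ln: "F l n \<le> 0"
  proof -
    have "F l n = (\<Sum>w\<in>V. n w * F l (Evec w))" by (rule F_exp)
    also have "\<dots> \<le> 0"
    proof (rule sum_nonpos)
      fix w assume "w \<in> V"
      show "n w * F l (Evec w) \<le> 0"
      proof (cases "l w < 0")
        case True
        then have "w \<in> Bs" using l by (auto simp: lat_def supported_def)
        then have "F l (Evec w) \<le> 0" using neg by blast
        then have "0 \<le> l w * F l (Evec w)"
          using True by (intro mult_nonpos_nonpos) auto
        then show ?thesis using True by (simp add: n_def)
      qed (simp add: n_def)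
    qed
    finally show ?thesis .
  qed
  have pn: "F p n \<ge> 0"
    unfolding form_def
  proof (intro sum_nonneg)
    fix v w assume "v \<in> V" "w \<in> V"
    show "0 \<le> p v * n w * imat adj e v w"
      by (cases "v = w") (auto simp: p_def n_def imat_def)
  qed
  have "F l n = F p n - F n n" using lpn F_diff by metis
  then have nn: "F n n \<ge> 0" using ln pn by linarith
  have "n \<in> lat V"
    using l BV by (auto simp: lat_def supported_def n_def)
  then have "n = 0" using nd nn unfolding neg_definite_def by force
  show ?thesis unfolding le_fun_def
  proof
    fix x
    have "n x = 0" using \<open>n = 0\<close> by simp
    then show "0 x \<le> l x" by (auto simp: n_def split: if_splits)
  qed
qed


lemma key_step:
  assumes ell: "elliptic V adj e"
    and Dl: "D \<in> lat V" and Dn: "0 \<le> D" and Dz: "D \<noteq> 0"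
    and DC: "D = ZK V adj e - C"
    and Q: "\<forall>w\<in>support V D. F C (Evec w) \<le> 0"
  shows "(\<forall>w\<in>support V D. F C (Evec w) = 0) \<and> F D D = (\<Sum>w\<in>V. D w * (of_int (e w) + 2))"
proof -
  have ipD: "F D (Evec w) = of_int (e w) + 2 - F C (Evec w)" if "w \<in> V" for w
    using that ZK_prop by (simp add: DC F_diff)
  have "F D D = (\<Sum>w\<in>V. D w * F D (Evec w))" by (rule F_exp)
  also have "\<dots> = (\<Sum>w\<in>V. D w * (of_int (e w) + 2) - D w * F C (Evec w))"
    by (rule sum.cong) (auto simp: ipD algebra_simps)
  also have "\<dots> = (\<Sum>w\<in>V. D w * (of_int (e w) + 2)) - (\<Sum>w\<in>V. D w * F C (Evec w))"
    by (rule sum_subtractf)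
  finally have FDD: "F D D = (\<Sum>w\<in>V. D w * (of_int (e w) + 2)) - (\<Sum>w\<in>V. D w * F C (Evec w))" .
  have chiD: "chi V adj e D = (\<Sum>w\<in>V. D w * F C (Evec w)) / 2"
    using chi_eq[of D] FDD by (simp add: field_simps)
  have Dw: "0 \<le> D w" for w using Dn by (simp add: le_fun_def)
  have terms: "D w * F C (Evec w) \<le> 0" if w: "w \<in> V" for w
  proof (cases "D w = 0")
    case False
    then have "w \<in> support V D" using w by (simp add: support_def)
    then have "F C (Evec w) \<le> 0" using Q by blast
    then show ?thesis using Dw[of w] by (simp add: mult_nonneg_nonpos)
  qed simp
  have "0 < D" using Dn Dz by (simp add: less_le)
  then have "chi V adj e D \<ge> 0" using ell Dl by (auto simp: elliptic_def)
  then have s0: "(\<Sum>w\<in>V. D w * F C (Evec w)) \<ge> 0" using chiD by simp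
  have s1: "(\<Sum>w\<in>V. D w * F C (Evec w)) \<le> 0" using terms by (simp add: sum_nonpos)
  have s2: "(\<Sum>w\<in>V. - (D w * F C (Evec w))) = 0"
    using s0 s1 by (simp add: sum_negf)
  have each: "\<forall>w\<in>V. - (D w * F C (Evec w)) = 0"
    using s2 sum_nonneg_eq_0_iff[OF fin, of "\<lambda>w. - (D w * F C (Evec w))"] terms by simp
  have "\<forall>w\<in>support V D. F C (Evec w) = 0"
    using each by (auto simp: support_def)
  moreover have "F D D = (\<Sum>w\<in>V. D w * (of_int (e w) + 2))"
    using FDD s0 s1 by simp
  ultimately show ?thesis by blast
qed

lemma final_step:
  assumes ell: "elliptic V adj e"
    and Dl: "D \<in> lat V" and Dn: "0 \<le> D"
    and v: "v \<in> V" "v \<notin> support V D"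
    and FDD: "F D D = (\<Sum>w\<in>V. D w * (of_int (e w) + 2))"
    and Es: "F (Eset (support V D)) (Evec v) = 1"
  shows "F D (Evec v) = 1"
proof -
  have Dw: "0 \<le> D w" for w using Dn by (simp add: le_fun_def)
  have Dint: "D w \<in> \<int>" for w using Dl by (simp add: lat_def)
  define x where "x = D + Evec v"
  have xl: "x \<in> lat V"
    using Dl v(1) by (auto simp: x_def lat_def supported_def Evec_def)
  have x0: "0 < x"
  proof -
    have "0 \<le> x" using Dw by (auto simp: x_def le_fun_def Evec_def)
    moreover have "x v \<noteq> 0" using Dw[of v] by (simp add: x_def Evec_def)
    then have "x \<noteq> 0" by auto
    ultimately show ?thesis by (simp add: less_le)
  qed
  have chix: "chi V adj e x \<ge> 0" using ell xl x0 by (auto simp: elliptic_def)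
  have EE: "F (Evec v) (Evec v) = of_int (e v)"
  proof -
    have "F (Evec v) (Evec v) = (\<Sum>u\<in>V. Evec v u * imat adj e u v)" by (rule F_Evec[OF v(1)])
    also have "\<dots> = (\<Sum>u\<in>V. if u = v then imat adj e u v else 0)"
      by (rule sum.cong) (auto simp: Evec_def)
    also have "\<dots> = imat adj e v v" using fin v(1) by (simp add: sum.delta')
    finally show ?thesis by (simp add: imat_def)
  qed
  have Fxx: "F x x = F D D + 2 * F D (Evec v) + of_int (e v)"
    unfolding x_def F_add F_add2 EE using F_sym[of "Evec v" D] by simp
  have sx: "(\<Sum>w\<in>V. x w * (of_int (e w) + 2)) = (\<Sum>w\<in>V. D w * (of_int (e w) + 2)) + (of_int (e v) + 2)"
  proof -
    have "(\<Sum>w\<in>V. x w * (of_int (e w) + 2)) = (\<Sum>w\<in>V. D w * (of_int (e w) + 2)) + (\<Sum>w\<in>V. Evec v w * (of_int (e w) + 2))"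
      by (simp add: x_def algebra_simps sum.distrib)
    also have "(\<Sum>w\<in>V. Evec v w * (of_int (e w) + 2)) = (\<Sum>w\<in>V. if w = v then of_int (e w) + 2 else 0)"
      by (rule sum.cong) (auto simp: Evec_def)
    also have "\<dots> = of_int (e v) + 2" using fin v(1) by (simp add: sum.delta')
    finally show ?thesis .
  qed
  have "chi V adj e x = 1 - F D (Evec v)"
    using chi_eq[of x] Fxx sx FDD by (simp add: field_simps)
  then have le: "F D (Evec v) \<le> 1" using chix by simp
  have "1 = F (Eset (support V D)) (Evec v)" using Es by simp
  also have "\<dots> = (\<Sum>w\<in>V. Eset (support V D) w * imat adj e w v)" by (rule F_Evec[OF v(1)])
  also have "\<dots> \<le> (\<Sum>w\<in>V. D w * imat adj e w v)"
  proof (rule sum_mono)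
    fix w assume w: "w \<in> V"
    show "Eset (support V D) w * imat adj e w v \<le> D w * imat adj e w v"
    proof (cases "w \<in> support V D")
      case True
      then have wv: "w \<noteq> v" using v(2) by auto
      then have im: "0 \<le> imat adj e w v" by (simp add: imat_def)
      have "D w \<noteq> 0" using True by (simp add: support_def)
      moreover obtain n where n: "D w = of_int n" using Dint[of w] by (auto elim: Ints_cases)
      ultimately have "D w \<ge> 1" using Dw[of w] by simp
      then have "1 * imat adj e w v \<le> D w * imat adj e w v" using im by (rule mult_right_mono)
      then show ?thesis using True by (simp add: Eset_def)
    next
      case False
      then have "D w = 0" using w by (simp add: support_def)
      then show ?thesis using False by (simp add: Eset_def)
    qed
  qed
  also have "\<dots> = F D (Evec v)" by (rule F_Evec[OF v(1), symmetric])
  finally show ?thesis using le by simp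
qed

end

theorem mainTheorem16:
  fixes V :: "'v set" and adj :: "'v \<Rightarrow> 'v \<Rightarrow> bool" and e :: "'v \<Rightarrow> int"
    and B :: "int \<Rightarrow> 'v set" and Z :: "int \<Rightarrow> 'v \<Rightarrow> rat" and m j :: int and v :: 'v
  assumes "is_tree V adj"
    and "neg_definite V adj e"
    and "elliptic V adj e"
    and "NN_elliptic_seq V adj e B Z m"
    and "-1 \<le> j" and "j \<le> m - 1"
    and "v \<in> V - B (j + 1)"
    and "form V adj e (Eset (B (j + 1))) (Evec v) = 1"
  shows "form V adj e (Cseq Z j) (Evec v) = of_int (e v) + 1"
proof -
  have fin: "finite V" and symm: "\<And>v w. adj v w \<Longrightarrow> adj w v"
    using assms(1) by (auto simp: is_tree_def)
  interpret pl V adj e using fin symm assms(2) by unfold_locales auto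
  note ell = assms(3)
  define K where "K = ZK V adj e"
  have m1: "m \<ge> -1" and s: "is_s_class V adj e K (Z (-1))"
    and seq: "\<And>k. -1 \<le> k \<Longrightarrow> k < m \<Longrightarrow> K - Cseq Z k \<noteq> 0 \<and> B (k + 1) = support V (K - Cseq Z k)"
    and zm: "\<And>k. 0 \<le> k \<Longrightarrow> k \<le> m \<Longrightarrow> is_Zmin V adj e (B k) (Z k)"
    and top: "K = Cseq Z m"
    using assms(4) unfolding NN_elliptic_seq_def K_def by auto
  have Bsub: "B k \<subseteq> V" if "0 \<le> k" "k \<le> m" for k
  proof -
    have "B ((k - 1) + 1) = support V (K - Cseq Z (k - 1))" using seq[of "k - 1"] that by simp
    then show ?thesis by (auto simp: support_def)
  qed
  have Zprop: "Z k \<in> lat (B k) \<and> Z k \<noteq> 0 \<and> (\<forall>w\<in>B k. F (Z k) (Evec w) \<le> 0)"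
    if "0 \<le> k" "k \<le> m" for k
    using zm[OF that] unfolding is_Zmin_def is_least_in_def by auto
  have Znn: "0 \<le> Z k" if "0 \<le> k" "k \<le> m" for k
    using negativity[OF Bsub[OF that]] Zprop[OF that] by auto
  have Zlat: "Z k \<in> lat V" if "0 \<le> k" "k \<le> m" for k
    using Zprop[OF that] Bsub[OF that] by (auto simp: lat_def supported_def)
  have Dsum: "K - Cseq Z k = (\<Sum>i\<in>{k+1..m}. Z i)" if "-1 \<le> k" "k \<le> m" for k
  proof -
    have "{-1..m} = {-1..k} \<union> {k+1..m}" using that by auto
    then have "Cseq Z m = Cseq Z k + (\<Sum>i\<in>{k+1..m}. Z i)"
      unfolding Cseq_def by (simp add: sum.union_disjoint)
    then show ?thesis using top by simp
  qed
  have Dnn: "0 \<le> K - Cseq Z k" if "-1 \<le> k" "k \<le> m" for k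
    unfolding Dsum[OF that] by (rule sum_nonneg) (use Znn that in auto)
  have Dlat: "K - Cseq Z k \<in> lat V" if "-1 \<le> k" "k \<le> m" for k
  proof -
    have "\<forall>i\<in>{k+1..m}. Z i \<in> lat V" using Zlat that by auto
    then show ?thesis unfolding Dsum[OF that]
      by (auto simp: lat_def supported_def sum_fun_app intro!: Ints_sum)
  qed
  have Cstep: "Cseq Z (k + 1) = Cseq Z k + Z (k + 1)" if "-1 \<le> k" for k
  proof -
    have "{-1..k+1} = insert (k+1) {-1..k}" using that by auto
    then show ?thesis unfolding Cseq_def by (simp add: add.commute)
  qed
  have Q: "k \<le> m - 1 \<longrightarrow> (\<forall>w\<in>B (k + 1). F (Cseq Z k) (Evec w) \<le> 0)" if "-1 \<le> k" for k
    using that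
  proof (induction k rule: int_ge_induct)
    case base
    show ?case
    proof (intro impI ballI)
      fix w assume "-1 \<le> m - 1" and w: "w \<in> B (-1 + 1)"
      then have wV: "w \<in> V" using Bsub[of 0] by auto
      have "Cseq Z (-1) = Z (-1)" by (simp add: Cseq_def)
      moreover have "Z (-1) \<in> lipman V adj e"
        using s unfolding is_s_class_def is_least_in_def by auto
      ultimately show "F (Cseq Z (-1)) (Evec w) \<le> 0" using wV by (auto simp: lipman_def)
    qed
  next
    case (step k)
    show ?case
    proof (intro impI ballI)
      fix w assume km: "k + 1 \<le> m - 1" and w: "w \<in> B (k + 1 + 1)"
      define D where "D = K - Cseq Z k"
      have supD: "support V D = B (k + 1)" using seq[of k] step km by (simp add: D_def)
      have Qk: "\<forall>w\<in>support V D. F (Cseq Z k) (Evec w) \<le> 0" using step km supD by auto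
      have Dl: "D \<in> lat V" using Dlat[of k] step km by (simp add: D_def)
      have Dn: "0 \<le> D" using Dnn[of k] step km by (simp add: D_def)
      have Dz: "D \<noteq> 0" using seq[of k] step km by (simp add: D_def)
      have DC: "D = ZK V adj e - Cseq Z k" by (simp add: D_def K_def)
      have ks: "\<forall>w\<in>support V D. F (Cseq Z k) (Evec w) = 0"
        using key_step[OF ell Dl Dn Dz DC Qk] by (rule conjunct1)
      have D': "K - Cseq Z (k + 1) = D - Z (k + 1)" using Cstep[of k] step by (simp add: D_def)
      have sup2: "B (k + 1 + 1) = support V (D - Z (k + 1))" using seq[of "k+1"] step km D' by simp
      have wV: "w \<in> V" and nz: "D w - Z (k + 1) w \<noteq> 0" using w sup2 by (auto simp: support_def)
      have "0 \<le> D w - Z (k + 1) w"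
        using Dnn[of "k+1"] step km D' by (auto simp: le_fun_def)
      moreover have "0 \<le> Z (k + 1) w" using Znn[of "k+1"] step km by (auto simp: le_fun_def)
      ultimately have "D w \<noteq> 0" using nz by linarith
      then have wB: "w \<in> B (k + 1)" using wV supD by (auto simp: support_def)
      have "F (Cseq Z (k + 1)) (Evec w) = F (Cseq Z k) (Evec w) + F (Z (k + 1)) (Evec w)"
        using Cstep[of k] step by (simp add: F_add)
      also have "F (Cseq Z k) (Evec w) = 0" using ks wB supD by auto
      also have "F (Z (k + 1)) (Evec w) \<le> 0" using Zprop[of "k+1"] step km wB by auto
      finally show "F (Cseq Z (k + 1)) (Evec w) \<le> 0" by simp
    qed
  qed
  define D where "D = K - Cseq Z j"
  have jm: "j < m" using assms(6) by simp
  have supD: "support V D = B (j + 1)" using seq[of j] assms(5) jm by (simp add: D_def)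
  have Qj: "\<forall>w\<in>support V D. F (Cseq Z j) (Evec w) \<le> 0" using Q[OF assms(5)] assms(6) supD by auto
  have Dl: "D \<in> lat V" and Dn: "0 \<le> D" using Dlat[of j] Dnn[of j] assms(5) jm by (auto simp: D_def)
  have Dz: "D \<noteq> 0" using seq[of j] assms(5) jm by (simp add: D_def)
  have DC: "D = ZK V adj e - Cseq Z j" by (simp add: D_def K_def)
  have ks: "F D D = (\<Sum>w\<in>V. D w * (of_int (e w) + 2))"
    using key_step[OF ell Dl Dn Dz DC Qj] by (rule conjunct2)
  have FD: "F D (Evec v) = 1"
    by (rule final_step[OF ell Dl Dn]) (use assms(7,8) supD ks in auto)
  have "F (Cseq Z j) (Evec v) = F K (Evec v) - F D (Evec v)"
    unfolding D_def F_diff by simp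
  also have "F K (Evec v) = of_int (e v) + 2" using ZK_prop assms(7) unfolding K_def by auto
  finally show ?thesis using FD by simp
qed

end
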